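(* For every Euler–Venn diagram $d$ and all finite multisets $\Gamma,\Delta$ of compound diagrams, the following rules are sound (validity of all premisses implies validity of the conclusion): $(\mathrm{det}L)$ from $d,\Gamma\Rightarrow E(d)$ and $V(d),\Gamma\Rightarrow\Delta$ infer $d,\Gamma\Rightarrow\Delta$; $(\mathrm{det}R)$ from $E(d),\Gamma\Rightarrow V(d)$ infer $\Gamma\Rightarrow\Delta,d$.
   Context: Fix a countably infinite set $\mathcal V$ of propositional variables. A Heyting algebra $(H,\vee,\wedge,\to,0,1)$ is a bounded distributive lattice with a binary operation $\to$ such that $c\wedge a\le b\iff c\le a\to b$; $-a:=a\to0$; empty meets are $1$, empty joins $0$. A valuation is a map $v:\mathcal V\to H$. For a finite $L\subset\mathcal V$, a zone over $L$ is a pair $z=(\mathrm{in}(z),\mathrm{out}(z))$ of disjoint subsets of $L$ with union $L$; $\mathcal Z(L)$ is the set of all zones over $L$; $v(z)=\bigwedge_{c\in\mathrm{in}(z)}v(c)\wedge\bigwedge_{c\in\mathrm{out}(z)}-v(c)$ and $m_v(z)=\big(\bigwedge_{c\in\mathrm{in}(z)}v(c)\big)\to\big(\bigvee_{c\in\mathrm{out}(z)}v(c)\big)$. Unitary diagrams are of three kinds: Venn diagrams $d=(L,\mathcal Z(L),S)$, $S\subseteq\mathcal Z(L)$ shaded, $[\![d]\!]_v=\bigvee_{z\in S}v(z)$; pure Euler diagrams $d=(L,Z)$, $Z\subseteq\mathcal Z(L)$ visible zones, missing zones $M(d)=\mathcal Z(L)\setminus Z$, $[\![d]\!]_v=\bigwedge_{z\in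 M(d)}m_v(z)$; Euler–Venn diagrams $d=(L,Z,S)$ with $S\subseteq Z\subseteq\mathcal Z(L)$, with associated pure Euler diagram $E(d)=(L,Z)$ and Venn diagram $V(d)=(L,\mathcal Z(L),S)$, and $[\![d]\!]_v=[\![E(d)]\!]_v\to[\![V(d)]\!]_v$. Compound diagrams are built from unitary ones with $\wedge,\vee,\to$, interpreted by meet, join and Heyting implication. A sequent $\Gamma\Rightarrow\Delta$ (finite multisets of compound diagrams) is valid iff for every Heyting algebra and valuation $v$, $\bigwedge_{D\in\Gamma}[\![D]\!]_v\le\bigvee_{E\in\Delta}[\![E]\!]_v$. *)

theory Defs
  imports Main "HOL-Library.Multiset"
begin

record 'a halg =
  carrier :: "'a set"
  hjoin :: "'a \<Rightarrow> 'a \<Rightarrow> 'a"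
  hmeet :: "'a \<Rightarrow> 'a \<Rightarrow> 'a"
  himp  :: "'a \<Rightarrow> 'a \<Rightarrow> 'a"
  hbot  :: 'a
  htop  :: 'a

definition hle :: "'a halg \<Rightarrow> 'a \<Rightarrow> 'a \<Rightarrow> bool" where
  "hle H a b \<longleftrightarrow> hmeet H a b = a"

definition heyting :: "'a halg \<Rightarrow> bool" where
  "heyting H \<longleftrightarrow>
     hbot H \<in> carrier H \<and> htop H \<in> carrier H \<and>
     (\<forall>a\<in>carrier H. \<forall>b\<in>carrier H.
        hjoin H a b \<in> carrier H \<and> hmeet H a b \<in> carrier H \<and> himp H a b \<in> carrier H) \<and>
     (\<forall>a\<in>carrier H. \<forall>b\<in>carrier H.
        hjoin H a b = hjoin H b a \<and> hmeet H a b = hmeet H b a \<and>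
        hjoin H a (hmeet H a b) = a \<and> hmeet H a (hjoin H a b) = a) \<and>
     (\<forall>a\<in>carrier H. \<forall>b\<in>carrier H. \<forall>c\<in>carrier H.
        hjoin H a (hjoin H b c) = hjoin H (hjoin H a b) c \<and>
        hmeet H a (hmeet H b c) = hmeet H (hmeet H a b) c \<and>
        hmeet H a (hjoin H b c) = hjoin H (hmeet H a b) (hmeet H a c)) \<and>
     (\<forall>a\<in>carrier H. hjoin H a (hbot H) = a \<and> hmeet H a (htop H) = a) \<and>
     (\<forall>a\<in>carrier H. \<forall>b\<in>carrier H. \<forall>c\<in>carrier H.
        hle H (hmeet H c a) b \<longleftrightarrow> hle H c (himp H a b))"

definition hneg :: "'a halg \<Rightarrow> 'a \<Rightarrow> 'a" where
  "hneg H a = himp H a (hbot H)"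

definition bigmeet :: "'a halg \<Rightarrow> ('b \<Rightarrow> 'a) \<Rightarrow> 'b set \<Rightarrow> 'a" where
  "bigmeet H f S = Finite_Set.fold (\<lambda>x acc. hmeet H (f x) acc) (htop H) S"

definition bigjoin :: "'a halg \<Rightarrow> ('b \<Rightarrow> 'a) \<Rightarrow> 'b set \<Rightarrow> 'a" where
  "bigjoin H f S = Finite_Set.fold (\<lambda>x acc. hjoin H (f x) acc) (hbot H) S"

definition mmeet :: "'a halg \<Rightarrow> 'a multiset \<Rightarrow> 'a" where
  "mmeet H M = fold_mset (hmeet H) (htop H) M"

definition mjoin :: "'a halg \<Rightarrow> 'a multiset \<Rightarrow> 'a" where
  "mjoin H M = fold_mset (hjoin H) (hbot H) M"

type_synonym var = nat
type_synonym zone = "var set \<times> var set"  \<comment> \<open>(in z, out z)\<close>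

definition zones :: "var set \<Rightarrow> zone set" where
  "zones L = {(I, Ou). I \<inter> Ou = {} \<and> I \<union> Ou = L}"

datatype unitary =
    Venn "var set" "zone set"               \<comment> \<open>(L, Z(L), S): labels, shaded zones\<close>
  | Euler "var set" "zone set"              \<comment> \<open>(L, Z): labels, visible zones\<close>
  | EulerVenn "var set" "zone set" "zone set"

datatype diagram =
    Unit unitary
  | DAnd diagram diagram
  | DOr diagram diagram
  | DImp diagram diagram

fun wf_unitary :: "unitary \<Rightarrow> bool" where
  "wf_unitary (Venn L S) \<longleftrightarrow> finite L \<and> S \<subseteq> zones L"
| "wf_unitary (Euler L Z) \<longleftrightarrow> finite L \<and> Z \<subseteq> zones L"
| "wf_unitary (EulerVenn L Z S) \<longleftrightarrow> finite L \<and> S \<subseteq> Z \<and> Z \<subseteq> zones L"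

fun wf_diagram :: "diagram \<Rightarrow> bool" where
  "wf_diagram (Unit u) = wf_unitary u"
| "wf_diagram (DAnd a b) = (wf_diagram a \<and> wf_diagram b)"
| "wf_diagram (DOr a b) = (wf_diagram a \<and> wf_diagram b)"
| "wf_diagram (DImp a b) = (wf_diagram a \<and> wf_diagram b)"

fun is_euler_venn :: "unitary \<Rightarrow> bool" where
  "is_euler_venn (EulerVenn L Z S) = True"
| "is_euler_venn _ = False"

fun E_of :: "unitary \<Rightarrow> unitary" where
  "E_of (EulerVenn L Z S) = Euler L Z"
| "E_of u = u"

fun V_of :: "unitary \<Rightarrow> unitary" where
  "V_of (EulerVenn L Z S) = Venn L S"
| "V_of u = u"

definition zone_val :: "'a halg \<Rightarrow> (var \<Rightarrow> 'a) \<Rightarrow> zone \<Rightarrow> 'a" where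
  "zone_val H v z =
     hmeet H (bigmeet H v (fst z)) (bigmeet H (\<lambda>c. hneg H (v c)) (snd z))"

definition zone_m :: "'a halg \<Rightarrow> (var \<Rightarrow> 'a) \<Rightarrow> zone \<Rightarrow> 'a" where
  "zone_m H v z = himp H (bigmeet H v (fst z)) (bigjoin H v (snd z))"

definition sem_venn :: "'a halg \<Rightarrow> (var \<Rightarrow> 'a) \<Rightarrow> zone set \<Rightarrow> 'a" where
  "sem_venn H v S = bigjoin H (zone_val H v) S"

definition sem_euler :: "'a halg \<Rightarrow> (var \<Rightarrow> 'a) \<Rightarrow> var set \<Rightarrow> zone set \<Rightarrow> 'a" where
  "sem_euler H v L Z = bigmeet H (zone_m H v) (zones L - Z)"

fun sem_unitary :: "'a halg \<Rightarrow> (var \<Rightarrow> 'a) \<Rightarrow> unitary \<Rightarrow> 'a" where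
  "sem_unitary H v (Venn L S) = sem_venn H v S"
| "sem_unitary H v (Euler L Z) = sem_euler H v L Z"
| "sem_unitary H v (EulerVenn L Z S) = himp H (sem_euler H v L Z) (sem_venn H v S)"

fun sem :: "'a halg \<Rightarrow> (var \<Rightarrow> 'a) \<Rightarrow> diagram \<Rightarrow> 'a" where
  "sem H v (Unit u) = sem_unitary H v u"
| "sem H v (DAnd a b) = hmeet H (sem H v a) (sem H v b)"
| "sem H v (DOr a b) = hjoin H (sem H v a) (sem H v b)"
| "sem H v (DImp a b) = himp H (sem H v a) (sem H v b)"

definition valid :: "'a itself \<Rightarrow> diagram multiset \<Rightarrow> diagram multiset \<Rightarrow> bool" where
  "valid _ \<Gamma> \<Delta> \<longleftrightarrow>
     (\<forall>(H :: 'a halg) v. heyting H \<longrightarrow> range v \<subseteq> carrier H \<longrightarrow>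
        hle H (mmeet H (image_mset (sem H v) \<Gamma>)) (mjoin H (image_mset (sem H v) \<Delta>)))"

end

theory Submission
  imports Defs
begin

definition restr :: "'a set \<Rightarrow> ('a \<Rightarrow> 'a \<Rightarrow> 'a) \<Rightarrow> 'a \<Rightarrow> 'a \<Rightarrow> 'a" where
  "restr C g x y = (if x \<in> C \<and> y \<in> C then g x y else y)"

lemma restr_cfc:
  assumes cl: "\<And>x y. x\<in>C \<Longrightarrow> y\<in>C \<Longrightarrow> g x y \<in> C"
    and lc: "\<And>x y z. x\<in>C \<Longrightarrow> y\<in>C \<Longrightarrow> z\<in>C \<Longrightarrow> g x (g y z) = g y (g x z)"
  shows "comp_fun_commute (restr C g)"
  by unfold_locales (auto simp: restr_def fun_eq_iff cl lc)

lemma fold_in: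
  assumes "comp_fun_commute h" "\<And>a b. a\<in>A \<Longrightarrow> b\<in>B \<Longrightarrow> h a b \<in> B" "z\<in>B"
  shows "Finite_Set.fold h z A \<in> B"
proof (cases "finite A")
  case True
  interpret c: comp_fun_commute h by fact
  show ?thesis using True assms(2)
  proof (induction A rule: finite_induct)
    case empty then show ?case using assms(3) by simp
  next
    case (insert x F)
    then show ?case by simp
  qed
qed (simp add: assms)

lemma fold_set_in:
  assumes cl: "\<And>x y. x\<in>C \<Longrightarrow> y\<in>C \<Longrightarrow> g x y \<in> C"
    and lc: "\<And>x y z. x\<in>C \<Longrightarrow> y\<in>C \<Longrightarrow> z\<in>C \<Longrightarrow> g x (g y z) = g y (g x z)"
    and f: "\<And>x. x \<in> A \<Longrightarrow> f x \<in> C" and z: "z \<in> C"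
  shows "Finite_Set.fold (\<lambda>x acc. g (f x) acc) z A \<in> C"
proof -
  interpret c: comp_fun_commute "restr C g" using restr_cfc[of C g] cl lc by blast
  have cfc: "comp_fun_commute (\<lambda>x. restr C g (f x))"
    by unfold_locales (simp add: fun_eq_iff c.fun_left_comm)
  have "Finite_Set.fold (\<lambda>x acc. g (f x) acc) z A = Finite_Set.fold (\<lambda>x. restr C g (f x)) z A"
    by (rule fold_closed_eq[where B=C]) (auto simp: restr_def f cl z)
  also have "\<dots> \<in> C"
    by (rule fold_in[OF cfc]) (auto simp: restr_def f cl z)
  finally show ?thesis .
qed

lemma pow_restr:
  assumes cl: "\<And>x y. x\<in>C \<Longrightarrow> y\<in>C \<Longrightarrow> g x y \<in> C" and a: "a \<in> C" and b: "b \<in> C"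
  shows "(g a ^^ n) b = (restr C g a ^^ n) b \<and> (restr C g a ^^ n) b \<in> C"
  by (induction n) (auto simp: restr_def a b cl)

lemma fold_mset_restr:
  assumes cl: "\<And>x y. x\<in>C \<Longrightarrow> y\<in>C \<Longrightarrow> g x y \<in> C"
    and M: "set_mset M \<subseteq> C" and z: "z \<in> C"
  shows "fold_mset g z M = fold_mset (restr C g) z M"
  unfolding fold_mset_def
proof (rule fold_closed_eq[where B=C])
  fix a b assume "a \<in> set_mset M" "b \<in> C"
  then show "(g a ^^ count M a) b = (restr C g a ^^ count M a) b"
    and "(restr C g a ^^ count M a) b \<in> C"
    using pow_restr[of C g a b "count M a"] cl M by auto
qed (rule z)

lemma fold_mset_props:
  assumes cl: "\<And>x y. x\<in>C \<Longrightarrow> y\<in>C \<Longrightarrow> g x y \<in> C"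
    and lc: "\<And>x y z. x\<in>C \<Longrightarrow> y\<in>C \<Longrightarrow> z\<in>C \<Longrightarrow> g x (g y z) = g y (g x z)"
    and M: "set_mset M \<subseteq> C" and z: "z \<in> C"
  shows "fold_mset g z M \<in> C" and "x \<in> C \<Longrightarrow> fold_mset g z (add_mset x M) = g x (fold_mset g z M)"
proof -
  interpret c: comp_fun_commute "restr C g" using restr_cfc[of C g] cl lc by blast
  have inC: "fold_mset (restr C g) z N \<in> C" for N
  proof (induction N)
    case empty then show ?case using z by simp
  next
    case (add x N)
    have "fold_mset (restr C g) z (add_mset x N) = restr C g x (fold_mset (restr C g) z N)"
      by (rule c.fold_mset_add_mset)
    moreover have "restr C g x (fold_mset (restr C g) z N) \<in> C"
      using add.IH cl unfolding restr_def[of C g x "fold_mset (restr C g) z N"] by auto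
    ultimately show ?case by simp
  qed
  show "fold_mset g z M \<in> C" using fold_mset_restr[OF cl M z] inC by simp
  assume x: "x \<in> C"
  have e1: "fold_mset g z M = fold_mset (restr C g) z M"
    by (rule fold_mset_restr[of C g M z]) (use cl M z in auto)
  have e2: "fold_mset g z (add_mset x M) = fold_mset (restr C g) z (add_mset x M)"
    by (rule fold_mset_restr[of C g "add_mset x M" z]) (use cl M z x in auto)
  have e3: "fold_mset (restr C g) z (add_mset x M) = restr C g x (fold_mset (restr C g) z M)"
    by (rule c.fold_mset_add_mset)
  have "restr C g x (fold_mset (restr C g) z M) = g x (fold_mset (restr C g) z M)"
    using x inC[of M] unfolding restr_def[of C g x "fold_mset (restr C g) z M"] by auto
  then show "fold_mset g z (add_mset x M) = g x (fold_mset g z M)"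
    using e1 e2 e3 by simp
qed


context
  fixes H :: "'a halg"
  assumes hH: "heyting H"
begin

abbreviation "C \<equiv> carrier H"

lemma cl: "hbot H \<in> C" "htop H \<in> C"
  "a \<in> C \<Longrightarrow> b \<in> C \<Longrightarrow> hjoin H a b \<in> C"
  "a \<in> C \<Longrightarrow> b \<in> C \<Longrightarrow> hmeet H a b \<in> C"
  "a \<in> C \<Longrightarrow> b \<in> C \<Longrightarrow> himp H a b \<in> C"
  using hH unfolding heyting_def by blast+

lemma ax:
  assumes "a \<in> C" "b \<in> C" "c \<in> C"
  shows "hjoin H a b = hjoin H b a" "hmeet H a b = hmeet H b a"
    "hjoin H a (hmeet H a b) = a" "hmeet H a (hjoin H a b) = a"
    "hjoin H a (hjoin H b c) = hjoin H (hjoin H a b) c"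
    "hmeet H a (hmeet H b c) = hmeet H (hmeet H a b) c"
    "hjoin H a (hbot H) = a" "hmeet H a (htop H) = a"
    "hle H (hmeet H c a) b \<longleftrightarrow> hle H c (himp H a b)"
  using hH assms unfolding heyting_def by blast+

lemma meet_idem: "a \<in> C \<Longrightarrow> hmeet H a a = a"
  using ax(3)[of a a a] ax(4)[of a "hmeet H a a" a] cl by metis

lemma hle_refl: "a \<in> C \<Longrightarrow> hle H a a"
  by (simp add: hle_def meet_idem)

lemma hle_trans: "a \<in> C \<Longrightarrow> b \<in> C \<Longrightarrow> c \<in> C \<Longrightarrow> hle H a b \<Longrightarrow> hle H b c \<Longrightarrow> hle H a c"
  unfolding hle_def using ax(6)[of a b c] by metis

lemma hle_glb: "x \<in> C \<Longrightarrow> a \<in> C \<Longrightarrow> b \<in> C \<Longrightarrow> hle H x a \<Longrightarrow> hle H x b \<Longrightarrow> hle H x (hmeet H a b)"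
  unfolding hle_def using ax(6)[of x a b] by metis

lemma hle_meet1: "a \<in> C \<Longrightarrow> b \<in> C \<Longrightarrow> hle H (hmeet H a b) a"
  unfolding hle_def using ax(6)[of a b a] ax(2)[of a b a] ax(2)[of "hmeet H a b" a a] ax(6)[of a a b] meet_idem cl
  by metis

lemma hle_meet2: "a \<in> C \<Longrightarrow> b \<in> C \<Longrightarrow> hle H (hmeet H a b) b"
  using hle_meet1[of b a] ax(2)[of a b a] by metis

lemma hle_join1: "a \<in> C \<Longrightarrow> b \<in> C \<Longrightarrow> hle H a (hjoin H a b)"
  unfolding hle_def using ax(4)[of a b a] by metis

lemma lc_meet: "x \<in> C \<Longrightarrow> y \<in> C \<Longrightarrow> z \<in> C \<Longrightarrow> hmeet H x (hmeet H y z) = hmeet H y (hmeet H x z)"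
  using ax(6) ax(2) cl by metis

lemma lc_join: "x \<in> C \<Longrightarrow> y \<in> C \<Longrightarrow> z \<in> C \<Longrightarrow> hjoin H x (hjoin H y z) = hjoin H y (hjoin H x z)"
  using ax(5) ax(1) cl by metis

lemma bigmeet_in: "(\<And>x. x \<in> A \<Longrightarrow> f x \<in> C) \<Longrightarrow> bigmeet H f A \<in> C"
  unfolding bigmeet_def by (rule fold_set_in[where g="hmeet H"]) (auto simp: cl lc_meet)

lemma bigjoin_in: "(\<And>x. x \<in> A \<Longrightarrow> f x \<in> C) \<Longrightarrow> bigjoin H f A \<in> C"
  unfolding bigjoin_def by (rule fold_set_in[where g="hjoin H"]) (auto simp: cl lc_join)

lemma sem_in:
  assumes v: "range v \<subseteq> C"
  shows "sem H v D \<in> C"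
proof -
  have vv: "v x \<in> C" for x using v by auto
  have zv: "zone_val H v z \<in> C" for z
    unfolding zone_val_def hneg_def by (intro cl bigmeet_in) (auto simp: vv cl)
  have zm: "zone_m H v z \<in> C" for z
    unfolding zone_m_def by (intro cl bigmeet_in bigjoin_in) (auto simp: vv)
  have su: "sem_unitary H v u \<in> C" for u
    by (cases u) (auto simp: sem_venn_def sem_euler_def intro!: cl bigjoin_in bigmeet_in zv zm)
  show ?thesis by (induction D) (auto simp: su cl)
qed

lemma mmeet_in: "set_mset M \<subseteq> C \<Longrightarrow> mmeet H M \<in> C"
  unfolding mmeet_def by (rule fold_mset_props(1)) (auto simp: cl lc_meet)

lemma mjoin_in: "set_mset M \<subseteq> C \<Longrightarrow> mjoin H M \<in> C"
  unfolding mjoin_def by (rule fold_mset_props(1)) (auto simp: cl lc_join)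

lemma mmeet_add: "set_mset M \<subseteq> C \<Longrightarrow> x \<in> C \<Longrightarrow> mmeet H (add_mset x M) = hmeet H x (mmeet H M)"
  unfolding mmeet_def by (rule fold_mset_props(2)) (auto simp: cl lc_meet)

lemma mjoin_add: "set_mset M \<subseteq> C \<Longrightarrow> x \<in> C \<Longrightarrow> mjoin H (add_mset x M) = hjoin H x (mjoin H M)"
  unfolding mjoin_def by (rule fold_mset_props(2)) (auto simp: cl lc_join)

lemma mjoin_single: "x \<in> C \<Longrightarrow> mjoin H {#x#} = x"
  unfolding mjoin_def using ax(7)[of x x x] by simp

end


theorem lemma9:
  fixes d :: unitary and \<Gamma> \<Delta> :: "diagram multiset"
  assumes "is_euler_venn d" and "wf_unitary d"
    and "\<forall>D\<in>#\<Gamma>. wf_diagram D" and "\<forall>D\<in>#\<Delta>. wf_diagram D"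
  shows "(valid TYPE('a) (add_mset (Unit d) \<Gamma>) {#Unit (E_of d)#} \<and>
          valid TYPE('a) (add_mset (Unit (V_of d)) \<Gamma>) \<Delta>
          \<longrightarrow> valid TYPE('a) (add_mset (Unit d) \<Gamma>) \<Delta>)
       \<and> (valid TYPE('a) (add_mset (Unit (E_of d)) \<Gamma>) {#Unit (V_of d)#}
          \<longrightarrow> valid TYPE('a) \<Gamma> (add_mset (Unit d) \<Delta>))"
proof -
  obtain L Z S where d: "d = EulerVenn L Z S" using assms(1) by (cases d) auto
  show ?thesis
  proof (intro conjI impI)
    assume p: "valid TYPE('a) (add_mset (Unit d) \<Gamma>) {#Unit (E_of d)#} \<and>
          valid TYPE('a) (add_mset (Unit (V_of d)) \<Gamma>) \<Delta>"
    show "valid TYPE('a) (add_mset (Unit d) \<Gamma>) \<Delta>"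
      unfolding valid_def
    proof (intro allI impI)
      fix H :: "'a halg" and v :: "var \<Rightarrow> 'a"
      assume hH: "heyting H" and v: "range v \<subseteq> carrier H"
      define e where "e = sem_euler H v L Z"
      define s where "s = sem_venn H v S"
      define g where "g = mmeet H (image_mset (sem H v) \<Gamma>)"
      define r where "r = mjoin H (image_mset (sem H v) \<Delta>)"
      define dv where "dv = himp H e s"
      have sI: "\<And>D. sem H v D \<in> carrier H" using sem_in[OF hH v] .
      have G: "set_mset (image_mset (sem H v) \<Gamma>) \<subseteq> carrier H" using sI by auto
      have Dl: "set_mset (image_mset (sem H v) \<Delta>) \<subseteq> carrier H" using sI by auto
      have eC: "e \<in> carrier H" using sI[of "Unit (Euler L Z)"] by (simp add: e_def)
      have sC: "s \<in> carrier H" using sI[of "Unit (Venn L S)"] by (simp add: s_def)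
      have gC: "g \<in> carrier H" unfolding g_def by (rule mmeet_in[OF hH G])
      have rC: "r \<in> carrier H" unfolding r_def by (rule mjoin_in[OF hH Dl])
      have dC: "dv \<in> carrier H" unfolding dv_def by (rule cl(5)[OF hH eC sC])
      have xC: "hmeet H dv g \<in> carrier H" by (rule cl(4)[OF hH dC gC])
      have p1: "hle H (hmeet H dv g) e"
        using conjunct1[OF p, unfolded valid_def, rule_format, OF hH v]
        by (auto simp: d mmeet_add[OF hH G] eC[unfolded e_def] sC[unfolded s_def] dC[unfolded dv_def e_def s_def] mjoin_single[OF hH] sI e_def s_def dv_def g_def)
      have p2: "hle H (hmeet H s g) r"
        using conjunct2[OF p, unfolded valid_def, rule_format, OF hH v]
        by (auto simp: d mmeet_add[OF hH G] eC[unfolded e_def] sC[unfolded s_def] dC[unfolded dv_def e_def s_def] sI s_def g_def r_def)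
      have mp: "hle H (hmeet H dv e) s"
        using ax(9)[OF hH eC sC dC] hle_refl[OF hH dC] by (simp add: dv_def)
      have "hle H (hmeet H dv g) (hmeet H dv e)"
        by (rule hle_glb[OF hH xC dC eC hle_meet1[OF hH dC gC] p1])
      then have a1: "hle H (hmeet H dv g) s"
        by (rule hle_trans[OF hH xC cl(4)[OF hH dC eC] sC _ mp])
      have "hle H (hmeet H dv g) (hmeet H s g)"
        by (rule hle_glb[OF hH xC sC gC a1 hle_meet2[OF hH dC gC]])
      then have "hle H (hmeet H dv g) r"
        by (rule hle_trans[OF hH xC cl(4)[OF hH sC gC] rC _ p2])
      then show "hle H (mmeet H (image_mset (sem H v) (add_mset (Unit d) \<Gamma>)))
          (mjoin H (image_mset (sem H v) \<Delta>))"
        by (simp add: d mmeet_add[OF hH G] eC[unfolded e_def] sC[unfolded s_def] dC[unfolded dv_def e_def s_def] sI e_def s_def dv_def g_def r_def)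
    qed
  next
    assume p: "valid TYPE('a) (add_mset (Unit (E_of d)) \<Gamma>) {#Unit (V_of d)#}"
    show "valid TYPE('a) \<Gamma> (add_mset (Unit d) \<Delta>)"
      unfolding valid_def
    proof (intro allI impI)
      fix H :: "'a halg" and v :: "var \<Rightarrow> 'a"
      assume hH: "heyting H" and v: "range v \<subseteq> carrier H"
      define e where "e = sem_euler H v L Z"
      define s where "s = sem_venn H v S"
      define g where "g = mmeet H (image_mset (sem H v) \<Gamma>)"
      define r where "r = mjoin H (image_mset (sem H v) \<Delta>)"
      define dv where "dv = himp H e s"
      have sI: "\<And>D. sem H v D \<in> carrier H" using sem_in[OF hH v] .
      have G: "set_mset (image_mset (sem H v) \<Gamma>) \<subseteq> carrier H" using sI by auto
      have Dl: "set_mset (image_mset (sem H v) \<Delta>) \<subseteq> carrier H" using sI by auto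
      have eC: "e \<in> carrier H" using sI[of "Unit (Euler L Z)"] by (simp add: e_def)
      have sC: "s \<in> carrier H" using sI[of "Unit (Venn L S)"] by (simp add: s_def)
      have gC: "g \<in> carrier H" unfolding g_def by (rule mmeet_in[OF hH G])
      have rC: "r \<in> carrier H" unfolding r_def by (rule mjoin_in[OF hH Dl])
      have dC: "dv \<in> carrier H" unfolding dv_def by (rule cl(5)[OF hH eC sC])
      have p1: "hle H (hmeet H e g) s"
        using p[unfolded valid_def, rule_format, OF hH v]
        by (auto simp: d mmeet_add[OF hH G] eC[unfolded e_def] sC[unfolded s_def] dC[unfolded dv_def e_def s_def] mjoin_single[OF hH] sI e_def s_def g_def)
      then have "hle H (hmeet H g e) s" using ax(2)[OF hH eC gC gC] by simp
      then have "hle H g dv" using ax(9)[OF hH eC sC gC] by (simp add: dv_def)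
      then have "hle H g (hjoin H dv r)"
        by (rule hle_trans[OF hH gC dC cl(3)[OF hH dC rC] _ hle_join1[OF hH dC rC]])
      then show "hle H (mmeet H (image_mset (sem H v) \<Gamma>))
          (mjoin H (image_mset (sem H v) (add_mset (Unit d) \<Delta>)))"
        by (simp add: d mjoin_add[OF hH Dl] eC[unfolded e_def] sC[unfolded s_def] dC[unfolded dv_def e_def s_def] sI e_def s_def dv_def g_def r_def)
    qed
  qed
qed

end
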